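(* Let $U,V$ be molecules, $F\colon\mathsf{Mol}/U\to\mathsf{Mol}/V$ an active strict functor, and $\iota\colon W\sqsubseteq U$ a submolecule (regarded as an arrow of $\mathsf{Mol}/U$). Then the pasting diagram $F(\iota)\colon F(W)\to V$ is a submolecule inclusion.
   Context: Oriented graded posets: graded posets with, for each $x$, a partition of the elements covered by $x$ into input faces $\partial^-x$ and output faces $\partial^+x$; morphisms induce bijections on input/output faces; embeddings are injective morphisms. Molecules are Hadzihasanovic's class generated from the point $\mathbf{1}$ under pasting $U\#_kV$ (pushout along an isomorphism $\partial_k^+U\cong\partial_k^-V$ of boundaries) and under $U\Rightarrow V$ for round molecules of equal dimension with matching boundaries. Submolecule inclusions form the smallest class of embeddings of molecules containing isomorphisms, closed under composition, and containing $U\hookrightarrow U\#_kV$ and $V\hookrightarrow U\#_kV$; $W\sqsubseteq U$ means the inclusion of $W$ is one. $\mathsf{Mol}/U$ is the strict $\omega$-category whose $k$-arrows are morphisms $W\to U$ of oriented graded posets from $k$-dimensional molecules (pasting diagrams, up to unique isomorphism), boundaries by restriction, composition by pasting; the arrow $F(\iota)$ is written $F(W)\to V$. A strict functor $F\colon\mathsf{Mol}/U\to\mathsf{Mol}/V$ is active if $F(\mathrm{id}_U)=\mathrm{id}_V$. *)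

theory Defs
  imports Main
begin

datatype sgn = Mn | Pl

fun neg :: "sgn \<Rightarrow> sgn" where
  "neg Mn = Pl" | "neg Pl = Mn"

text \<open>An oriented graded poset is presented by its (finite) set of elements and,
  for each element x, its input faces and output faces (the elements covered by x,
  partitioned into inputs and outputs). The partial order is the reflexive-transitive
  closure of the face relation.\<close>

record 'a ogp =
  els  :: "'a set"
  inp  :: "'a \<Rightarrow> 'a set"
  outp :: "'a \<Rightarrow> 'a set"

definition faces_s :: "sgn \<Rightarrow> 'a ogp \<Rightarrow> 'a \<Rightarrow> 'a set" where
  "faces_s a P x = (case a of Mn \<Rightarrow> inp P x | Pl \<Rightarrow> outp P x)"

definition faces :: "'a ogp \<Rightarrow> 'a \<Rightarrow> 'a set" where
  "faces P x = inp P x \<union> outp P x"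

text \<open>Grading: minimal elements have dimension 0 and each covering step raises it by 1.
  Together with finiteness this says the poset is graded and that the face relation is
  exactly its covering relation.\<close>
definition grading :: "'a ogp \<Rightarrow> ('a \<Rightarrow> nat) \<Rightarrow> bool" where
  "grading P d \<longleftrightarrow> (\<forall>x\<in>els P. (faces P x = {} \<longrightarrow> d x = 0) \<and>
                                 (\<forall>y\<in>faces P x. d x = Suc (d y)))"

definition ogpos :: "'a ogp \<Rightarrow> bool" where
  "ogpos P \<longleftrightarrow> finite (els P) \<and>
     (\<forall>x\<in>els P. faces P x \<subseteq> els P \<and> inp P x \<inter> outp P x = {}) \<and>
     (\<forall>x. x \<notin> els P \<longrightarrow> faces P x = {}) \<and>
     (\<exists>d. grading P d)"

definition dim :: "'a ogp \<Rightarrow> 'a \<Rightarrow> nat" where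
  "dim P = (SOME d. grading P d)"

definition pdim :: "'a ogp \<Rightarrow> nat" where
  "pdim P = Max (dim P ` els P)"

definition facerel :: "'a ogp \<Rightarrow> ('a \<times> 'a) set" where
  "facerel P = {(y, x). x \<in> els P \<and> y \<in> faces P x}"

definition cl :: "'a ogp \<Rightarrow> 'a set \<Rightarrow> 'a set" where
  "cl P S = {y. \<exists>x\<in>S. (y, x) \<in> (facerel P)\<^sup>*}"

definition closed_in :: "'a ogp \<Rightarrow> 'a set \<Rightarrow> bool" where
  "closed_in P A \<longleftrightarrow> A \<subseteq> els P \<and> (\<forall>x\<in>A. faces P x \<subseteq> A)"

definition restr :: "'a ogp \<Rightarrow> 'a set \<Rightarrow> 'a ogp" where
  "restr P A = \<lparr> els = A,
                 inp = (\<lambda>x. if x \<in> A then inp P x else {}),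
                 outp = (\<lambda>x. if x \<in> A then outp P x else {}) \<rparr>"

definition maxel :: "'a ogp \<Rightarrow> 'a set" where
  "maxel P = {x \<in> els P. \<forall>y\<in>els P. x \<notin> faces P y}"

definition Delta :: "sgn \<Rightarrow> nat \<Rightarrow> 'a ogp \<Rightarrow> 'a set" where
  "Delta a n P = {x \<in> els P. dim P x = n \<and> (\<forall>y\<in>els P. x \<notin> faces_s (neg a) P y)}"

definition bd :: "sgn \<Rightarrow> nat \<Rightarrow> 'a ogp \<Rightarrow> 'a set" where
  "bd a n P = cl P (Delta a n P) \<union> cl P {x \<in> maxel P. dim P x < n}"

text \<open>The (dim P - 1)-boundary, empty for 0-dimensional P (convention boundary_{-1} = {}).\<close>
definition bdry :: "sgn \<Rightarrow> 'a ogp \<Rightarrow> 'a set" where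
  "bdry a P = (if pdim P = 0 then {} else bd a (pdim P - 1) P)"

definition round :: "'a ogp \<Rightarrow> bool" where
  "round P \<longleftrightarrow> (\<forall>n < pdim P. bd Mn n P \<inter> bd Pl n P =
       (if n = 0 then {} else bd Mn (n - 1) P \<union> bd Pl (n - 1) P))"

text \<open>P is (internally) the pasting A #_k B: the pushout of A and B along
  boundary^+_k A = boundary^-_k B.\<close>
definition is_paste :: "nat \<Rightarrow> 'a ogp \<Rightarrow> 'a set \<Rightarrow> 'a set \<Rightarrow> bool" where
  "is_paste k P A B \<longleftrightarrow> closed_in P A \<and> closed_in P B \<and> A \<union> B = els P \<and>
      A \<inter> B = bd Pl k (restr P A) \<and> A \<inter> B = bd Mn k (restr P B)"

inductive molecule :: "'a ogp \<Rightarrow> bool" where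
  point: "ogpos P \<Longrightarrow> els P = {x} \<Longrightarrow> faces P x = {} \<Longrightarrow> molecule P"
| paste: "ogpos P \<Longrightarrow> is_paste k P A B \<Longrightarrow> molecule (restr P A) \<Longrightarrow>
          molecule (restr P B) \<Longrightarrow> molecule P"
| rewrite: "ogpos P \<Longrightarrow> t \<in> els P \<Longrightarrow> closed_in P A \<Longrightarrow> closed_in P B \<Longrightarrow>
          A \<union> B = els P - {t} \<Longrightarrow>
          molecule (restr P A) \<Longrightarrow> molecule (restr P B) \<Longrightarrow>
          round (restr P A) \<Longrightarrow> round (restr P B) \<Longrightarrow>
          pdim (restr P A) = n \<Longrightarrow> pdim (restr P B) = n \<Longrightarrow>
          bdry Mn (restr P A) = bdry Mn (restr P B) \<Longrightarrow>
          bdry Pl (restr P A) = bdry Pl (restr P B) \<Longrightarrow>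
          A \<inter> B = bdry Mn (restr P A) \<union> bdry Pl (restr P A) \<Longrightarrow>
          inp P t = {x \<in> A. dim P x = n} \<Longrightarrow> outp P t = {x \<in> B. dim P x = n} \<Longrightarrow>
          molecule P"

definition ogmorph :: "'a ogp \<Rightarrow> ('a \<Rightarrow> 'b) \<Rightarrow> 'b ogp \<Rightarrow> bool" where
  "ogmorph P f Q \<longleftrightarrow> (\<forall>x\<in>els P. f x \<in> els Q \<and>
        bij_betw f (inp P x) (inp Q (f x)) \<and> bij_betw f (outp P x) (outp Q (f x)))"

definition ogiso :: "'a ogp \<Rightarrow> ('a \<Rightarrow> 'b) \<Rightarrow> 'b ogp \<Rightarrow> bool" where
  "ogiso P f Q \<longleftrightarrow> ogmorph P f Q \<and> bij_betw f (els P) (els Q)"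

inductive subincl :: "'a ogp \<Rightarrow> ('a \<Rightarrow> 'a) \<Rightarrow> 'a ogp \<Rightarrow> bool" where
  iso: "molecule W \<Longrightarrow> molecule U \<Longrightarrow> ogiso W f U \<Longrightarrow> subincl W f U"
| comp: "subincl W f X \<Longrightarrow> subincl X g U \<Longrightarrow> subincl W (g \<circ> f) U"
| inl: "ogpos P \<Longrightarrow> is_paste k P A B \<Longrightarrow> molecule (restr P A) \<Longrightarrow>
        molecule (restr P B) \<Longrightarrow> subincl (restr P A) id P"
| inr: "ogpos P \<Longrightarrow> is_paste k P A B \<Longrightarrow> molecule (restr P A) \<Longrightarrow>
        molecule (restr P B) \<Longrightarrow> subincl (restr P B) id P"

section \<open>The strict omega-category Mol/U (cells represented up to isomorphism over U)\<close>

type_synonym ('a, 'b) pd = "'a ogp \<times> ('a \<Rightarrow> 'b)"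

definition cell :: "'b ogp \<Rightarrow> ('a, 'b) pd \<Rightarrow> bool" where
  "cell U D \<longleftrightarrow> molecule (fst D) \<and> ogmorph (fst D) (snd D) U"

definition isoover :: "('a, 'b) pd \<Rightarrow> ('a, 'b) pd \<Rightarrow> bool" where
  "isoover D E \<longleftrightarrow> (\<exists>\<phi>. ogiso (fst D) \<phi> (fst E) \<and>
                       (\<forall>x\<in>els (fst D). snd E (\<phi> x) = snd D x))"

definition bdcell :: "sgn \<Rightarrow> nat \<Rightarrow> ('a, 'b) pd \<Rightarrow> ('a, 'b) pd" where
  "bdcell a k D = (restr (fst D) (bd a k (fst D)), snd D)"

definition composite :: "'b ogp \<Rightarrow> nat \<Rightarrow> ('a, 'b) pd \<Rightarrow> ('a, 'b) pd \<Rightarrow> ('a, 'b) pd \<Rightarrow> bool" where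
  "composite U k H D1 D2 \<longleftrightarrow> cell U H \<and> cell U D1 \<and> cell U D2 \<and>
     (\<exists>A B. is_paste k (fst H) A B \<and>
            isoover (restr (fst H) A, snd H) D1 \<and> isoover (restr (fst H) B, snd H) D2)"

text \<open>A strict functor Mol/U -> Mol/V, given on representatives (pasting diagrams on nat).\<close>
definition strict_functor ::
  "'b ogp \<Rightarrow> 'c ogp \<Rightarrow> ((nat, 'b) pd \<Rightarrow> (nat, 'c) pd) \<Rightarrow> bool" where
  "strict_functor U V F \<longleftrightarrow>
     (\<forall>D. cell U D \<longrightarrow> cell V (F D)) \<and>
     (\<forall>D E. cell U D \<longrightarrow> cell U E \<longrightarrow> isoover D E \<longrightarrow> isoover (F D) (F E)) \<and>
     (\<forall>D a k. cell U D \<longrightarrow> isoover (F (bdcell a k D)) (bdcell a k (F D))) \<and>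
     (\<forall>k H D1 D2. composite U k H D1 D2 \<longrightarrow> composite V k (F H) (F D1) (F D2))"

text \<open>Active: F(id_U) = id_V; id_U is represented by any isomorphism onto U.\<close>
definition active ::
  "'b ogp \<Rightarrow> 'c ogp \<Rightarrow> ((nat, 'b) pd \<Rightarrow> (nat, 'c) pd) \<Rightarrow> bool" where
  "active U V F \<longleftrightarrow> (\<forall>D. cell U D \<longrightarrow> ogiso (fst D) (snd D) U \<longrightarrow>
                         ogiso (fst (F D)) (snd (F D)) V)"

end

theory Submission imports Defs begin

lemma mol_ogpos: "molecule P \<Longrightarrow> ogpos P"
  by (induction rule: molecule.induct) auto

lemma faces_subset: "ogpos P \<Longrightarrow> x \<in> els P \<Longrightarrow> faces P x \<subseteq> els P"
  unfolding ogpos_def by blast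
lemma inp_subset: "ogpos P \<Longrightarrow> x \<in> els P \<Longrightarrow> inp P x \<subseteq> els P"
  unfolding ogpos_def faces_def by blast
lemma outp_subset: "ogpos P \<Longrightarrow> x \<in> els P \<Longrightarrow> outp P x \<subseteq> els P"
  unfolding ogpos_def faces_def by blast
lemma faces_s_subset: "faces_s a P x \<subseteq> faces P x"
  unfolding faces_s_def faces_def by (cases a) auto

lemma grading_unique_aux:
  assumes "ogpos P" "grading P d" "grading P d'"
  shows "\<forall>x. x \<in> els P \<longrightarrow> d x = n \<longrightarrow> d x = d' x"
proof (induction n rule: less_induct)
  case (less n)
  show ?case
  proof (intro allI impI)
    fix x assume x: "x \<in> els P" "d x = n"
    show "d x = d' x"
    proof (cases "faces P x = {}")
      case True then show ?thesis using assms(2,3) x unfolding grading_def by auto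
    next
      case False
      then obtain y where y: "y \<in> faces P x" by blast
      have yP: "y \<in> els P" using faces_subset[OF assms(1) x(1)] y by blast
      have e: "d x = Suc (d y)" "d' x = Suc (d' y)"
        using assms(2,3) x(1) y unfolding grading_def by auto
      then have "d y < n" using x(2) by simp
      then have "d y = d' y" using less.IH yP by blast
      then show ?thesis using e by simp
    qed
  qed
qed

lemma grading_unique:
  "ogpos P \<Longrightarrow> grading P d \<Longrightarrow> grading P d' \<Longrightarrow> x \<in> els P \<Longrightarrow> d x = d' x"
  using grading_unique_aux by blast

lemma dim_grading: assumes "ogpos P" shows "grading P (dim P)"
proof -
  obtain d where "grading P d" using assms unfolding ogpos_def by blast
  then show ?thesis unfolding dim_def by (rule someI[where P="grading P"])
qed

lemma dim_eq: "ogpos P \<Longrightarrow> grading P d \<Longrightarrow> x \<in> els P \<Longrightarrow> dim P x = d x"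
  using grading_unique[of P "dim P" d x] dim_grading by blast

lemma cl_subset: assumes "ogpos P" "S \<subseteq> els P" shows "cl P S \<subseteq> els P"
proof
  fix y assume "y \<in> cl P S"
  then obtain x where x: "x \<in> S" "(y, x) \<in> (facerel P)\<^sup>*" unfolding cl_def by blast
  from x(2) show "y \<in> els P"
  proof (induction rule: converse_rtrancl_induct)
    case base then show ?case using x(1) assms(2) by blast
  next
    case (step a b) then show ?case using faces_subset[OF assms(1)] unfolding facerel_def by blast
  qed
qed

lemma bd_subset: "ogpos P \<Longrightarrow> bd a n P \<subseteq> els P"
  unfolding bd_def using cl_subset[of P] unfolding Delta_def maxel_def by auto

lemma bdry_subset: "ogpos P \<Longrightarrow> bdry a P \<subseteq> els P"
  unfolding bdry_def using bd_subset by auto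

lemma restr_simps[simp]:
  "els (restr P A) = A"
  "inp (restr P A) x = (if x \<in> A then inp P x else {})"
  "outp (restr P A) x = (if x \<in> A then outp P x else {})"
  by (auto simp: restr_def)

lemma faces_restr[simp]: "faces (restr P A) x = (if x \<in> A then faces P x else {})"
  by (auto simp: faces_def)
lemma faces_s_restr[simp]: "faces_s a (restr P A) x = (if x \<in> A then faces_s a P x else {})"
  by (cases a) (auto simp: faces_s_def)

lemma ogpos_restr:
  assumes "ogpos P" "closed_in P A" shows "ogpos (restr P A)"
proof -
  obtain d where d: "grading P d" using assms(1) unfolding ogpos_def by blast
  have "grading (restr P A) d" using d assms(2) unfolding grading_def closed_in_def by auto
  moreover have "finite A" using assms unfolding ogpos_def closed_in_def by (meson finite_subset)
  ultimately show ?thesis using assms unfolding ogpos_def closed_in_def by auto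
qed

lemma transfer_set:
  assumes "inj_on f X" "f ` X = Y" "A \<subseteq> X" "B \<subseteq> Y" "\<And>x. x \<in> X \<Longrightarrow> f x \<in> B \<longleftrightarrow> x \<in> A"
  shows "B = f ` A"
  using assms by blast

locale ogiso_ctx =
  fixes P :: "'a ogp" and Q :: "'b ogp" and f :: "'a \<Rightarrow> 'b"
  assumes oP: "ogpos P" and oQ: "ogpos Q" and iso: "ogiso P f Q"
begin

lemma bij: "bij_betw f (els P) (els Q)" using iso unfolding ogiso_def by blast
lemma injf: "inj_on f (els P)" using bij by (rule bij_betw_imp_inj_on)
lemma img: "f ` els P = els Q" using bij by (rule bij_betw_imp_surj_on)
lemma fin: "x \<in> els P \<Longrightarrow> f x \<in> els Q" using img by blast

lemma inp_img: "x \<in> els P \<Longrightarrow> inp Q (f x) = f ` inp P x"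
proof -
  assume "x \<in> els P"
  then have "bij_betw f (inp P x) (inp Q (f x))" using iso unfolding ogiso_def ogmorph_def by blast
  then show ?thesis by (simp add: bij_betw_imp_surj_on)
qed
lemma outp_img: "x \<in> els P \<Longrightarrow> outp Q (f x) = f ` outp P x"
proof -
  assume "x \<in> els P"
  then have "bij_betw f (outp P x) (outp Q (f x))" using iso unfolding ogiso_def ogmorph_def by blast
  then show ?thesis by (simp add: bij_betw_imp_surj_on)
qed
lemma faces_img: "x \<in> els P \<Longrightarrow> faces Q (f x) = f ` faces P x"
  by (simp add: faces_def inp_img outp_img image_Un)
lemma faces_s_img: "x \<in> els P \<Longrightarrow> faces_s a Q (f x) = f ` faces_s a P x"
  by (cases a) (simp_all add: faces_s_def inp_img outp_img)

lemma faces_iff: assumes "x \<in> els P" "w \<in> els P"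
  shows "f x \<in> faces Q (f w) \<longleftrightarrow> x \<in> faces P w"
  unfolding faces_img[OF assms(2)] using inj_on_image_mem_iff[OF injf assms(1) faces_subset[OF oP assms(2)]] .
lemma faces_s_iff: assumes "x \<in> els P" "w \<in> els P"
  shows "f x \<in> faces_s a Q (f w) \<longleftrightarrow> x \<in> faces_s a P w"
proof -
  have "faces_s a P w \<subseteq> els P" using faces_subset[OF oP assms(2)] faces_s_subset[of a P w] by blast
  then show ?thesis unfolding faces_s_img[OF assms(2)] using inj_on_image_mem_iff[OF injf assms(1)] by blast
qed

lemma dim_img: assumes "x \<in> els P" shows "dim Q (f x) = dim P x"
proof -
  let ?d = "dim P \<circ> inv_into (els P) f"
  have g: "grading P (dim P)" using dim_grading[OF oP] .
  have "grading Q ?d" unfolding grading_def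
  proof
    fix y assume y: "y \<in> els Q"
    then obtain x where x: "x \<in> els P" "y = f x" using img by blast
    have iv: "\<And>z. z \<in> els P \<Longrightarrow> inv_into (els P) f (f z) = z" using injf by simp
    show "(faces Q y = {} \<longrightarrow> ?d y = 0) \<and> (\<forall>z\<in>faces Q y. ?d y = Suc (?d z))"
    proof safe
      assume "faces Q y = {}"
      then have "faces P x = {}" using faces_img x by simp
      then show "?d y = 0" using g x iv unfolding grading_def by simp
    next
      fix z assume "z \<in> faces Q y"
      then obtain w where w: "w \<in> faces P x" "z = f w" using faces_img x by auto
      have "w \<in> els P" using w faces_subset[OF oP x(1)] by blast
      then show "?d y = Suc (?d z)" using g x iv w unfolding grading_def by simp
    qed
  qed
  then have "dim Q (f x) = ?d (f x)" using dim_eq[OF oQ] fin assms by blast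
  then show ?thesis using injf assms by simp
qed

lemma rt1:
  assumes "(y, x) \<in> (facerel P)\<^sup>*" "x \<in> els P"
  shows "y \<in> els P \<and> (f y, f x) \<in> (facerel Q)\<^sup>*"
  using assms(1)
proof (induction rule: converse_rtrancl_induct)
  case base then show ?case using assms(2) by simp
next
  case (step a b)
  then have b: "b \<in> els P" "a \<in> faces P b" unfolding facerel_def by auto
  then have a: "a \<in> els P" using faces_subset[OF oP] by blast
  have "(f a, f b) \<in> facerel Q" using faces_iff[OF a b(1)] b fin unfolding facerel_def by auto
  then show ?case using a step by (meson converse_rtrancl_into_rtrancl)
qed

lemma rt2:
  assumes "(y', x') \<in> (facerel Q)\<^sup>*" "x' = f x" "x \<in> els P"
  shows "\<exists>y\<in>els P. y' = f y \<and> (y, x) \<in> (facerel P)\<^sup>*"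
  using assms(1)
proof (induction rule: converse_rtrancl_induct)
  case base then show ?case using assms(2,3) by blast
next
  case (step a b)
  then obtain w where w: "w \<in> els P" "b = f w" "(w, x) \<in> (facerel P)\<^sup>*" by blast
  have "a \<in> faces Q (f w)" using step(1) w unfolding facerel_def by auto
  then obtain v where v: "v \<in> faces P w" "a = f v" using faces_img w by auto
  have "v \<in> els P" using v faces_subset[OF oP w(1)] by blast
  moreover have "(v, w) \<in> facerel P" using v w unfolding facerel_def by auto
  then have "(v, x) \<in> (facerel P)\<^sup>*" using w(3) by (meson converse_rtrancl_into_rtrancl)
  ultimately show ?case using v w by blast
qed

lemma cl_img: assumes "S \<subseteq> els P" shows "cl Q (f ` S) = f ` cl P S"
proof (rule transfer_set[OF injf img cl_subset[OF oP assms] cl_subset[OF oQ]])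
  show "f ` S \<subseteq> els Q" using assms img by blast
  fix x assume x: "x \<in> els P"
  show "f x \<in> cl Q (f ` S) \<longleftrightarrow> x \<in> cl P S"
  proof
    assume "f x \<in> cl Q (f ` S)"
    then obtain s where s: "s \<in> S" "(f x, f s) \<in> (facerel Q)\<^sup>*" unfolding cl_def by blast
    have "s \<in> els P" using s(1) assms by blast
    from rt2[OF s(2) refl this] obtain y where y: "y \<in> els P" "f x = f y" "(y, s) \<in> (facerel P)\<^sup>*"
      by blast
    have "x = y" using injf x y(1,2) by (meson inj_onD)
    then show "x \<in> cl P S" using y(3) s(1) unfolding cl_def by blast
  next
    assume "x \<in> cl P S"
    then obtain s where s: "s \<in> S" "(x, s) \<in> (facerel P)\<^sup>*" unfolding cl_def by blast
    then show "f x \<in> cl Q (f ` S)" using rt1[OF s(2)] assms unfolding cl_def by blast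
  qed
qed

lemma maxel_img: "maxel Q = f ` maxel P"
proof (rule transfer_set[OF injf img])
  show "maxel P \<subseteq> els P" "maxel Q \<subseteq> els Q" unfolding maxel_def by auto
  fix x assume x: "x \<in> els P"
  have e: "(\<forall>y\<in>els Q. f x \<notin> faces Q y) \<longleftrightarrow> (\<forall>w\<in>els P. f x \<notin> faces Q (f w))"
    by (simp add: img[symmetric])
  have "(\<forall>y\<in>els Q. f x \<notin> faces Q y) \<longleftrightarrow> (\<forall>y\<in>els P. x \<notin> faces P y)"
    unfolding e using faces_iff x by auto
  then show "f x \<in> maxel Q \<longleftrightarrow> x \<in> maxel P" using x fin unfolding maxel_def by auto
qed

lemma Delta_img: "Delta a n Q = f ` Delta a n P"
proof (rule transfer_set[OF injf img])
  show "Delta a n P \<subseteq> els P" "Delta a n Q \<subseteq> els Q" unfolding Delta_def by auto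
  fix x assume x: "x \<in> els P"
  have e: "(\<forall>y\<in>els Q. f x \<notin> faces_s (neg a) Q y) \<longleftrightarrow> (\<forall>w\<in>els P. f x \<notin> faces_s (neg a) Q (f w))"
    by (simp add: img[symmetric])
  have "(\<forall>y\<in>els Q. f x \<notin> faces_s (neg a) Q y) \<longleftrightarrow> (\<forall>y\<in>els P. x \<notin> faces_s (neg a) P y)"
    unfolding e using faces_s_iff x by auto
  then show "f x \<in> Delta a n Q \<longleftrightarrow> x \<in> Delta a n P" using x fin dim_img unfolding Delta_def by auto
qed

lemma bd_img: "bd a n Q = f ` bd a n P"
proof -
  have "{x \<in> maxel Q. dim Q x < n} = f ` {x \<in> maxel P. dim P x < n}"
  proof (rule transfer_set[OF injf img])
    show "{x \<in> maxel P. dim P x < n} \<subseteq> els P" "{x \<in> maxel Q. dim Q x < n} \<subseteq> els Q"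
      unfolding maxel_def by auto
    fix x assume x: "x \<in> els P"
    have "maxel P \<subseteq> els P" unfolding maxel_def by auto
    then have "f x \<in> maxel Q \<longleftrightarrow> x \<in> maxel P" unfolding maxel_img
      using inj_on_image_mem_iff[OF injf x] by blast
    then show "f x \<in> {x \<in> maxel Q. dim Q x < n} \<longleftrightarrow> x \<in> {x \<in> maxel P. dim P x < n}"
      using dim_img[OF x] by simp
  qed
  moreover have s: "Delta a n P \<subseteq> els P" "{x \<in> maxel P. dim P x < n} \<subseteq> els P"
    unfolding Delta_def maxel_def by auto
  ultimately show ?thesis unfolding bd_def Delta_img
    using cl_img[OF s(1)] cl_img[OF s(2)] by (simp only: image_Un)
qed

lemma pdim_eq: "pdim Q = pdim P"
proof -
  have "dim Q ` els Q = (dim Q \<circ> f) ` els P" unfolding img[symmetric] by (simp add: image_comp)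
  also have "... = dim P ` els P" by (rule image_cong) (simp_all add: dim_img)
  finally have "dim Q ` els Q = dim P ` els P" .
  then show ?thesis unfolding pdim_def by simp
qed

lemma bdry_img: "bdry a Q = f ` bdry a P"
  unfolding bdry_def pdim_eq using bd_img by simp

lemma round_iff: "round Q \<longleftrightarrow> round P"
proof -
  have s: "\<And>a n. bd a n P \<subseteq> els P" using bd_subset[OF oP] .
  have "\<And>n. (bd Mn n Q \<inter> bd Pl n Q = (if n = 0 then {} else bd Mn (n - 1) Q \<union> bd Pl (n - 1) Q))
     \<longleftrightarrow> (bd Mn n P \<inter> bd Pl n P = (if n = 0 then {} else bd Mn (n - 1) P \<union> bd Pl (n - 1) P))"
  proof -
    fix n
    have "bd Mn n Q \<inter> bd Pl n Q = f ` (bd Mn n P \<inter> bd Pl n P)"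
      using bd_img inj_on_image_Int[OF injf s s] by simp
    moreover have "(if n = 0 then {} else bd Mn (n - 1) Q \<union> bd Pl (n - 1) Q) =
        f ` (if n = 0 then {} else bd Mn (n - 1) P \<union> bd Pl (n - 1) P)"
      using bd_img by (simp add: image_Un)
    moreover have "(if n = 0 then {} else bd Mn (n - 1) P \<union> bd Pl (n - 1) P) \<subseteq> els P"
      using s by auto
    moreover have "bd Mn n P \<inter> bd Pl n P \<subseteq> els P" using s by auto
    ultimately show "?thesis n" by (simp add: inj_on_image_eq_iff[OF injf])
  qed
  then show ?thesis unfolding round_def pdim_eq by simp
qed

lemma closed_img: "closed_in P A \<Longrightarrow> closed_in Q (f ` A)"
  unfolding closed_in_def using img faces_img by blast

lemma restr_ctx: assumes "closed_in P A" shows "ogiso_ctx (restr P A) (restr Q (f ` A)) f"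
proof
  show "ogpos (restr P A)" using ogpos_restr[OF oP assms] .
  show "ogpos (restr Q (f ` A))" using ogpos_restr[OF oQ closed_img[OF assms]] .
  have A: "A \<subseteq> els P" using assms unfolding closed_in_def by blast
  have "bij_betw f A (f ` A)" by (rule inj_on_imp_bij_betw[OF inj_on_subset[OF injf A]])
  moreover have "ogmorph (restr P A) f (restr Q (f ` A))"
    unfolding ogmorph_def
  proof
    fix x assume x: "x \<in> els (restr P A)"
    then have xA: "x \<in> A" by simp
    then have xP: "x \<in> els P" using A by blast
    have "bij_betw f (inp P x) (inp Q (f x))" "bij_betw f (outp P x) (outp Q (f x))"
      using iso xP unfolding ogiso_def ogmorph_def by blast+
    then show "f x \<in> els (restr Q (f ` A)) \<and> bij_betw f (inp (restr P A) x) (inp (restr Q (f ` A)) (f x)) \<and>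
         bij_betw f (outp (restr P A) x) (outp (restr Q (f ` A)) (f x))"
      using xA by simp
  qed
  ultimately show "ogiso (restr P A) f (restr Q (f ` A))" unfolding ogiso_def by simp
qed

end


lemma ogiso_inv:
  assumes "ogpos P" "ogiso P f Q"
  shows "ogiso Q (inv_into (els P) f) P"
proof -
  have bij: "bij_betw f (els P) (els Q)" using assms(2) unfolding ogiso_def by blast
  have m: "ogmorph Q (inv_into (els P) f) P" unfolding ogmorph_def
  proof
    fix y assume y: "y \<in> els Q"
    then obtain x where x: "x \<in> els P" "y = f x" using bij_betw_imp_surj_on[OF bij] by blast
    have ix: "inv_into (els P) f y = x" using x bij_betw_imp_inj_on[OF bij] by simp
    have bi: "bij_betw f (inp P x) (inp Q (f x))" "bij_betw f (outp P x) (outp Q (f x))"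
      using assms(2) x(1) unfolding ogiso_def ogmorph_def by blast+
    have "bij_betw (inv_into (els P) f) (inp Q y) (inp P x)"
      using bij_betw_inv_into_subset[OF bij inp_subset[OF assms(1) x(1)]] bij_betw_imp_surj_on[OF bi(1)] x(2)
      by simp
    moreover have "bij_betw (inv_into (els P) f) (outp Q y) (outp P x)"
      using bij_betw_inv_into_subset[OF bij outp_subset[OF assms(1) x(1)]] bij_betw_imp_surj_on[OF bi(2)] x(2)
      by simp
    ultimately show "inv_into (els P) f y \<in> els P \<and>
        bij_betw (inv_into (els P) f) (inp Q y) (inp P (inv_into (els P) f y)) \<and>
        bij_betw (inv_into (els P) f) (outp Q y) (outp P (inv_into (els P) f y))"
      using ix x by simp
  qed
  show ?thesis unfolding ogiso_def using m bij_betw_inv_into[OF bij] by blast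
qed

lemma ogmorph_cong:
  assumes "ogpos P" "ogmorph P f Q" "\<And>x. x \<in> els P \<Longrightarrow> g x = f x"
  shows "ogmorph P g Q"
  unfolding ogmorph_def
proof
  fix x assume x: "x \<in> els P"
  have b: "f x \<in> els Q" "bij_betw f (inp P x) (inp Q (f x))" "bij_betw f (outp P x) (outp Q (f x))"
    using assms(2) x unfolding ogmorph_def by blast+
  have "bij_betw g (inp P x) (inp Q (f x))"
    using b(2) bij_betw_cong[of "inp P x" g f] inp_subset[OF assms(1) x] assms(3) by blast
  moreover have "bij_betw g (outp P x) (outp Q (f x))"
    using b(3) bij_betw_cong[of "outp P x" g f] outp_subset[OF assms(1) x] assms(3) by blast
  ultimately show "g x \<in> els Q \<and> bij_betw g (inp P x) (inp Q (g x)) \<and> bij_betw g (outp P x) (outp Q (g x))"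
    using b(1) assms(3)[OF x] by simp
qed

lemma ogiso_cong:
  assumes "ogpos P" "ogiso P f Q" "\<And>x. x \<in> els P \<Longrightarrow> g x = f x"
  shows "ogiso P g Q"
proof -
  have "ogmorph P f Q" using assms(2) unfolding ogiso_def by blast
  then have "ogmorph P g Q" using ogmorph_cong[OF assms(1)] assms(3) by blast
  moreover have "bij_betw g (els P) (els Q)"
    using assms(2) bij_betw_cong[of "els P" g f] assms(3) unfolding ogiso_def by blast
  ultimately show ?thesis unfolding ogiso_def by blast
qed

lemma ogiso_id: "ogiso P id P"
  unfolding ogiso_def ogmorph_def by simp

lemma ogmorph_comp:
  assumes "ogmorph W f X" "ogmorph X g U" shows "ogmorph W (g \<circ> f) U"
  unfolding ogmorph_def
proof
  fix x assume x: "x \<in> els W"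
  have a: "f x \<in> els X" "bij_betw f (inp W x) (inp X (f x))" "bij_betw f (outp W x) (outp X (f x))"
    using assms(1) x unfolding ogmorph_def by blast+
  have b: "g (f x) \<in> els U" "bij_betw g (inp X (f x)) (inp U (g (f x)))"
    "bij_betw g (outp X (f x)) (outp U (g (f x)))"
    using assms(2) a(1) unfolding ogmorph_def by blast+
  show "(g \<circ> f) x \<in> els U \<and> bij_betw (g \<circ> f) (inp W x) (inp U ((g \<circ> f) x)) \<and>
        bij_betw (g \<circ> f) (outp W x) (outp U ((g \<circ> f) x))"
    using b(1) bij_betw_trans[OF a(2) b(2)] bij_betw_trans[OF a(3) b(3)] by simp
qed

lemma ogmorph_restr_id:
  assumes "closed_in P A" shows "ogmorph (restr P A) id P"
  unfolding ogmorph_def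
proof
  fix x assume "x \<in> els (restr P A)"
  then have "x \<in> A" "x \<in> els P" using assms unfolding closed_in_def by auto
  then show "id x \<in> els P \<and> bij_betw id (inp (restr P A) x) (inp P (id x)) \<and>
       bij_betw id (outp (restr P A) x) (outp P (id x))" by simp
qed

lemma ogmorph_restr:
  assumes "closed_in P A" "ogmorph P g U" shows "ogmorph (restr P A) g U"
  using ogmorph_comp[OF ogmorph_restr_id[OF assms(1)] assms(2)] by simp

lemma mol_iso: "molecule P \<Longrightarrow> ogiso P f Q \<Longrightarrow> ogpos Q \<Longrightarrow> molecule Q"
proof (induction P arbitrary: f Q rule: molecule.induct)
  case (point P x)
  interpret I: ogiso_ctx P Q f using point by unfold_locales
  have e: "els Q = {f x}" using I.img point by simp
  have fc: "faces Q (f x) = {}" using I.faces_img point by simp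
  show ?case by (rule molecule.point[OF I.oQ e fc])
next
  case (paste P k A B)
  interpret I: ogiso_ctx P Q f using paste by unfold_locales
  from paste.hyps(2) have cA: "closed_in P A" and cB: "closed_in P B" and U: "A \<union> B = els P"
    and iA: "A \<inter> B = bd Pl k (restr P A)" and iB: "A \<inter> B = bd Mn k (restr P B)"
    unfolding is_paste_def by auto
  interpret IA: ogiso_ctx "restr P A" "restr Q (f ` A)" f by (rule I.restr_ctx[OF cA])
  interpret IB: ogiso_ctx "restr P B" "restr Q (f ` B)" f by (rule I.restr_ctx[OF cB])
  have AP: "A \<subseteq> els P" "B \<subseteq> els P" using cA cB unfolding closed_in_def by auto
  have int: "f ` A \<inter> f ` B = f ` (A \<inter> B)" using inj_on_image_Int[OF I.injf AP] by simp
  have un: "f ` A \<union> f ` B = els Q" using U I.img by (simp add: image_Un[symmetric])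
  have "is_paste k Q (f ` A) (f ` B)" unfolding is_paste_def
  proof (intro conjI)
    show "closed_in Q (f ` A)" "closed_in Q (f ` B)" using I.closed_img cA cB by auto
    show "f ` A \<union> f ` B = els Q" by (rule un)
    show "f ` A \<inter> f ` B = bd Pl k (restr Q (f ` A))" unfolding int IA.bd_img iA ..
    show "f ` A \<inter> f ` B = bd Mn k (restr Q (f ` B))" unfolding int IB.bd_img iB ..
  qed
  moreover have "molecule (restr Q (f ` A))" using paste.IH(1) IA.iso IA.oQ by blast
  moreover have "molecule (restr Q (f ` B))" using paste.IH(2) IB.iso IB.oQ by blast
  ultimately show ?case using molecule.paste[OF I.oQ] by blast
next
  case (rewrite P t A B n)
  interpret I: ogiso_ctx P Q f using rewrite by unfold_locales
  have cA: "closed_in P A" and cB: "closed_in P B" using rewrite by auto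
  interpret IA: ogiso_ctx "restr P A" "restr Q (f ` A)" f by (rule I.restr_ctx[OF cA])
  interpret IB: ogiso_ctx "restr P B" "restr Q (f ` B)" f by (rule I.restr_ctx[OF cB])
  have AP: "A \<subseteq> els P" "B \<subseteq> els P" using cA cB unfolding closed_in_def by auto
  have int: "f ` A \<inter> f ` B = f ` (A \<inter> B)" using inj_on_image_Int[OF I.injf AP] by simp
  have h1: "f t \<in> els Q" using I.fin rewrite by blast
  have h2: "closed_in Q (f ` A)" "closed_in Q (f ` B)" using I.closed_img cA cB by auto
  have "f ` A \<union> f ` B = f ` (els P - {t})" using rewrite(5) by (simp add: image_Un[symmetric])
  also have "\<dots> = els Q - {f t}"
    using inj_on_image_set_diff[OF I.injf, of "els P" "{t}"] rewrite(2) I.img by simp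
  finally have h3: "f ` A \<union> f ` B = els Q - {f t}" .
  have h4: "molecule (restr Q (f ` A))" using rewrite.IH(1) IA.iso IA.oQ by blast
  have h5: "molecule (restr Q (f ` B))" using rewrite.IH(2) IB.iso IB.oQ by blast
  have h6: "round (restr Q (f ` A))" "round (restr Q (f ` B))"
    using IA.round_iff IB.round_iff rewrite by auto
  have h7: "pdim (restr Q (f ` A)) = n" "pdim (restr Q (f ` B)) = n"
    using IA.pdim_eq IB.pdim_eq rewrite by auto
  have h8: "bdry Mn (restr Q (f ` A)) = bdry Mn (restr Q (f ` B))"
    "bdry Pl (restr Q (f ` A)) = bdry Pl (restr Q (f ` B))"
    using IA.bdry_img IB.bdry_img rewrite by auto
  have h9: "f ` A \<inter> f ` B = bdry Mn (restr Q (f ` A)) \<union> bdry Pl (restr Q (f ` A))"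
    unfolding int IA.bdry_img using rewrite by (simp add: image_Un)
  have dA: "f ` {x \<in> A. dim P x = n} = {y \<in> f ` A. dim Q y = n}"
    using AP I.dim_img by auto
  have dB: "f ` {x \<in> B. dim P x = n} = {y \<in> f ` B. dim Q y = n}"
    using AP I.dim_img by auto
  have h10: "inp Q (f t) = {y \<in> f ` A. dim Q y = n}"
    using I.inp_img[OF rewrite(2)] rewrite dA by simp
  have h11: "outp Q (f t) = {y \<in> f ` B. dim Q y = n}"
    using I.outp_img[OF rewrite(2)] rewrite dB by simp
  show ?case by (rule molecule.rewrite[OF I.oQ h1 h2 h3 h4 h5 h6 h7 h8 h9 h10 h11])
qed

lemma subincl_props: "subincl W f X \<Longrightarrow> molecule W \<and> molecule X \<and> ogmorph W f X"
proof (induction rule: subincl.induct)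
  case (iso W U f) then show ?case unfolding ogiso_def by blast
next
  case (comp W f X g U) then show ?case using ogmorph_comp by blast
next
  case (inl P k A B)
  have "closed_in P A" using inl(2) unfolding is_paste_def by blast
  then show ?case using molecule.paste[OF inl(1-4)] ogmorph_restr_id inl by blast
next
  case (inr P k A B)
  have "closed_in P B" using inr(2) unfolding is_paste_def by blast
  then show ?case using molecule.paste[OF inr(1-4)] ogmorph_restr_id inr by blast
qed


lemma subincl_fix:
  fixes W X :: "nat ogp" and f k :: "nat \<Rightarrow> nat"
  assumes s: "subincl W f X" and fi: "finite {x. f x \<noteq> x}" and ag: "\<forall>x\<in>els W. k x = f x"
  shows "subincl W k X"
proof -
  have p: "molecule W" "molecule X" "ogmorph W f X" using subincl_props[OF s] by auto
  have fW: "finite (els W)" "finite (els X)" using mol_ogpos[OF p(1)] mol_ogpos[OF p(2)]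
    unfolding ogpos_def by auto
  let ?M = "{x. f x \<noteq> x} \<union> els W \<union> els X"
  have fM: "finite ?M" using fi fW by simp
  define c where "c = Suc (Max ?M)"
  have c: "?M \<subseteq> {..<c}" unfolding c_def using Max_ge[OF fM] by (auto simp: le_imp_less_Suc)
  define e where "e = (\<lambda>x. if x \<in> els W then x else x + c)"
  define E where "E = (\<lambda>y. if y < c then y else k (y - c))"
  have "ogiso W e W" by (rule ogiso_cong[OF mol_ogpos[OF p(1)] ogiso_id]) (simp add: e_def)
  then have s1: "subincl W e W" by (rule subincl.iso[OF p(1) p(1)])
  have "ogiso X E X"
    by (rule ogiso_cong[OF mol_ogpos[OF p(2)] ogiso_id]) (use c in \<open>auto simp: E_def\<close>)
  then have s3: "subincl X E X" by (rule subincl.iso[OF p(2) p(2)])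
  have all: "subincl W (E \<circ> (f \<circ> e)) X" by (rule subincl.comp[OF subincl.comp[OF s1 s] s3])
  have "E \<circ> (f \<circ> e) = k"
  proof
    fix x
    show "(E \<circ> (f \<circ> e)) x = k x"
    proof (cases "x \<in> els W")
      case True
      then have "f x \<in> els X" using p(3) unfolding ogmorph_def by blast
      then have "f x < c" using c by blast
      then show ?thesis using True ag by (simp add: e_def E_def)
    next
      case False
      have "x + c \<notin> ?M" using c by auto
      then have "f (x + c) = x + c" by blast
      then show ?thesis using False by (simp add: e_def E_def)
    qed
  qed
  then show ?thesis using all by simp
qed

lemma isoover_refl: "isoover D D"
  unfolding isoover_def using ogiso_id by fastforce

lemma iso_to_subincl:
  assumes "isoover (Z, hZ) (Y, hY)" "molecule Z" "molecule Y"
  shows "\<exists>j. subincl Z j Y \<and> finite {x. j x \<noteq> x} \<and> (\<forall>z\<in>els Z. hY (j z) = hZ z)"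
proof -
  obtain \<psi> where ps: "ogiso Z \<psi> Y" "\<forall>x\<in>els Z. hY (\<psi> x) = hZ x"
    using assms(1) unfolding isoover_def by auto
  define j where "j = (\<lambda>x. if x \<in> els Z then \<psi> x else x)"
  have "ogiso Z j Y" by (rule ogiso_cong[OF mol_ogpos[OF assms(2)] ps(1)]) (simp add: j_def)
  then have "subincl Z j Y" by (rule subincl.iso[OF assms(2,3)])
  moreover have "finite {x. j x \<noteq> x}"
    using mol_ogpos[OF assms(2)] unfolding ogpos_def
    by (rule_tac finite_subset[of _ "els Z"]) (auto simp: j_def)
  moreover have "\<forall>z\<in>els Z. hY (j z) = hZ z" using ps(2) by (simp add: j_def)
  ultimately show ?thesis by blast
qed

lemma mol_of_isoover:
  assumes "isoover (restr Y A, hY) (Z, h)" "closed_in Y A" "ogpos Y" "molecule Z"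
  shows "molecule (restr Y A)"
proof -
  obtain \<phi> where "ogiso (restr Y A) \<phi> Z" using assms(1) unfolding isoover_def by auto
  then have "ogiso Z (inv_into (els (restr Y A)) \<phi>) (restr Y A)"
    using ogiso_inv ogpos_restr[OF assms(3,2)] by blast
  then show ?thesis using mol_iso[OF assms(4)] ogpos_restr[OF assms(3,2)] by blast
qed

lemma side_sub:
  assumes "closed_in Y A" "ogpos Y" "subincl (restr Y A) id Y"
    "isoover (restr Y A, hY) (Z, h)" "molecule Z" "molecule (restr Y A)"
  shows "\<exists>j. subincl Z j Y \<and> finite {x. j x \<noteq> x} \<and> (\<forall>z\<in>els Z. hY (j z) = h z)"
proof -
  obtain \<phi> where ph: "ogiso (restr Y A) \<phi> Z" "\<forall>x\<in>A. h (\<phi> x) = hY x"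
    using assms(4) unfolding isoover_def by auto
  have oA: "ogpos (restr Y A)" using ogpos_restr[OF assms(2,1)] .
  have bij: "bij_betw \<phi> A (els Z)" using ph(1) unfolding ogiso_def by simp
  define j where "j = (\<lambda>z. if z \<in> els Z then inv_into A \<phi> z else z)"
  have "ogiso Z (inv_into (els (restr Y A)) \<phi>) (restr Y A)" using ogiso_inv[OF oA ph(1)] .
  then have "ogiso Z j (restr Y A)"
    by (rule ogiso_cong[OF mol_ogpos[OF assms(5)]]) (simp add: j_def)
  then have "subincl Z j (restr Y A)" by (rule subincl.iso[OF assms(5,6)])
  then have "subincl Z (id \<circ> j) Y" by (rule subincl.comp[OF _ assms(3)])
  then have s: "subincl Z j Y" by simp
  have "finite {x. j x \<noteq> x}"
    using mol_ogpos[OF assms(5)] unfolding ogpos_def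
    by (rule_tac finite_subset[of _ "els Z"]) (auto simp: j_def)
  moreover have "\<forall>z\<in>els Z. hY (j z) = h z"
  proof
    fix z assume z: "z \<in> els Z"
    then have zi: "z \<in> \<phi> ` A" using bij bij_betw_imp_surj_on by blast
    have "inv_into A \<phi> z \<in> A" using inv_into_into[OF zi] .
    then have "hY (inv_into A \<phi> z) = h (\<phi> (inv_into A \<phi> z))" using ph(2) by simp
    also have "\<dots> = h z" using f_inv_into_f[OF zi] by simp
    finally show "hY (j z) = h z" using z by (simp add: j_def)
  qed
  ultimately show ?thesis using s by blast
qed

context
  fixes U :: "'b ogp" and V :: "'c ogp" and F :: "(nat, 'b) pd \<Rightarrow> (nat, 'c) pd"
  assumes sf: "strict_functor U V F"
begin

lemma F_cell: "cell U D \<Longrightarrow> cell V (F D)"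
  using sf unfolding strict_functor_def by blast
lemma F_iso: "cell U D \<Longrightarrow> cell U E \<Longrightarrow> isoover D E \<Longrightarrow> isoover (F D) (F E)"
  using sf unfolding strict_functor_def by blast
lemma F_comp: "composite U k H D1 D2 \<Longrightarrow> composite V k (F H) (F D1) (F D2)"
  using sf unfolding strict_functor_def by blast

lemma paste_case:
  assumes cP: "cell U (P, g)" and op: "ogpos P" and ip: "is_paste k P A B"
    and mA: "molecule (restr P A)" and mB: "molecule (restr P B)"
  shows "(\<exists>j. subincl (fst (F (restr P A, g))) j (fst (F (P, g))) \<and> finite {x. j x \<noteq> x} \<and>
           (\<forall>z\<in>els (fst (F (restr P A, g))). snd (F (P, g)) (j z) = snd (F (restr P A, g)) z)) \<and>
         (\<exists>j. subincl (fst (F (restr P B, g))) j (fst (F (P, g))) \<and> finite {x. j x \<noteq> x} \<and>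
           (\<forall>z\<in>els (fst (F (restr P B, g))). snd (F (P, g)) (j z) = snd (F (restr P B, g)) z))"
proof -
  have cA: "closed_in P A" and cB: "closed_in P B" using ip unfolding is_paste_def by auto
  have gm: "ogmorph P g U" using cP unfolding cell_def by simp
  have cellA: "cell U (restr P A, g)" using mA ogmorph_restr[OF cA gm] unfolding cell_def by simp
  have cellB: "cell U (restr P B, g)" using mB ogmorph_restr[OF cB gm] unfolding cell_def by simp
  have "composite U k (P, g) (restr P A, g) (restr P B, g)"
    unfolding composite_def using cP cellA cellB ip isoover_refl by fastforce
  then have co: "composite V k (F (P, g)) (F (restr P A, g)) (F (restr P B, g))" by (rule F_comp)
  obtain Y hY where FY: "F (P, g) = (Y, hY)" by fastforce
  obtain Z1 h1 where F1: "F (restr P A, g) = (Z1, h1)" by fastforce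
  obtain Z2 h2 where F2: "F (restr P B, g) = (Z2, h2)" by fastforce
  from co obtain A' B' where ab: "is_paste k Y A' B'" "isoover (restr Y A', hY) (Z1, h1)"
     "isoover (restr Y B', hY) (Z2, h2)" and cs: "cell V (Y, hY)" "cell V (Z1, h1)" "cell V (Z2, h2)"
    unfolding composite_def FY F1 F2 by auto
  have mY: "molecule Y" "molecule Z1" "molecule Z2" using cs unfolding cell_def by auto
  have oY: "ogpos Y" using mol_ogpos[OF mY(1)] .
  have cA': "closed_in Y A'" and cB': "closed_in Y B'" using ab(1) unfolding is_paste_def by auto
  have mA': "molecule (restr Y A')" using mol_of_isoover[OF ab(2) cA' oY mY(2)] .
  have mB': "molecule (restr Y B')" using mol_of_isoover[OF ab(3) cB' oY mY(3)] .
  have sA: "subincl (restr Y A') id Y" by (rule subincl.inl[OF oY ab(1) mA' mB'])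
  have sB: "subincl (restr Y B') id Y" by (rule subincl.inr[OF oY ab(1) mA' mB'])
  show ?thesis unfolding FY F1 F2 fst_conv snd_conv
    using side_sub[OF cA' oY sA ab(2) mY(2) mA'] side_sub[OF cB' oY sB ab(3) mY(3) mB'] by blast
qed

lemma key:
  "subincl W \<iota> X \<Longrightarrow> cell U (X, g) \<Longrightarrow>
   \<exists>j. subincl (fst (F (W, g \<circ> \<iota>))) j (fst (F (X, g))) \<and> finite {x. j x \<noteq> x} \<and>
       (\<forall>z\<in>els (fst (F (W, g \<circ> \<iota>))). snd (F (X, g)) (j z) = snd (F (W, g \<circ> \<iota>)) z)"
proof (induction W \<iota> X arbitrary: g rule: subincl.induct)
  case (iso W X f)
  have "ogmorph W f X" using iso.hyps(3) unfolding ogiso_def by blast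
  then have cW: "cell U (W, g \<circ> f)"
    using ogmorph_comp iso.prems iso.hyps(1) unfolding cell_def by auto
  have "isoover (W, g \<circ> f) (X, g)" unfolding isoover_def using iso.hyps(3) by auto
  then have io: "isoover (F (W, g \<circ> f)) (F (X, g))" by (rule F_iso[OF cW iso.prems])
  obtain Y hY where FY: "F (X, g) = (Y, hY)" by fastforce
  obtain Z hZ where FZ: "F (W, g \<circ> f) = (Z, hZ)" by fastforce
  have "molecule Y" "molecule Z" using F_cell[OF cW] F_cell[OF iso.prems] FY FZ unfolding cell_def by auto
  moreover have "isoover (Z, hZ) (Y, hY)" using io FY FZ by simp
  ultimately show ?case unfolding FY FZ fst_conv snd_conv using iso_to_subincl by blast
next
  case (comp W f X h U0)
  have p1: "ogmorph W f X" "molecule X" using subincl_props[OF comp.hyps(1)] by auto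
  have p2: "ogmorph X h U0" using subincl_props[OF comp.hyps(2)] by auto
  have cX: "cell U (X, g \<circ> h)"
    using ogmorph_comp[OF p2] comp.prems p1(2) unfolding cell_def by auto
  obtain j2 where j2: "subincl (fst (F (X, g \<circ> h))) j2 (fst (F (U0, g)))" "finite {x. j2 x \<noteq> x}"
    "\<forall>z\<in>els (fst (F (X, g \<circ> h))). snd (F (U0, g)) (j2 z) = snd (F (X, g \<circ> h)) z"
    using comp.IH(2)[OF comp.prems] by blast
  obtain j1 where j1: "subincl (fst (F (W, g \<circ> h \<circ> f))) j1 (fst (F (X, g \<circ> h)))" "finite {x. j1 x \<noteq> x}"
    "\<forall>z\<in>els (fst (F (W, g \<circ> h \<circ> f))). snd (F (X, g \<circ> h)) (j1 z) = snd (F (W, g \<circ> h \<circ> f)) z"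
    using comp.IH(1)[OF cX] by blast
  have e: "g \<circ> (h \<circ> f) = g \<circ> h \<circ> f" by (simp add: o_assoc)
  have s: "subincl (fst (F (W, g \<circ> h \<circ> f))) (j2 \<circ> j1) (fst (F (U0, g)))"
    by (rule subincl.comp[OF j1(1) j2(1)])
  have "{x. (j2 \<circ> j1) x \<noteq> x} \<subseteq> {x. j1 x \<noteq> x} \<union> {x. j2 x \<noteq> x}" by auto
  then have fi: "finite {x. (j2 \<circ> j1) x \<noteq> x}" using j1(2) j2(2) by (meson finite_UnI finite_subset)
  have mo: "ogmorph (fst (F (W, g \<circ> h \<circ> f))) j1 (fst (F (X, g \<circ> h)))"
    using subincl_props[OF j1(1)] by blast
  have "\<forall>z\<in>els (fst (F (W, g \<circ> h \<circ> f))). snd (F (U0, g)) ((j2 \<circ> j1) z) = snd (F (W, g \<circ> h \<circ> f)) z"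
  proof
    fix z assume z: "z \<in> els (fst (F (W, g \<circ> h \<circ> f)))"
    then have "j1 z \<in> els (fst (F (X, g \<circ> h)))" using mo unfolding ogmorph_def by blast
    then show "snd (F (U0, g)) ((j2 \<circ> j1) z) = snd (F (W, g \<circ> h \<circ> f)) z" using j1(3) j2(3) z by simp
  qed
  then show ?case unfolding e using s fi by blast
next
  case (inl P k A B)
  then show ?case using paste_case[OF inl.prems inl.hyps] by simp
next
  case (inr P k A B)
  then show ?case using paste_case[OF inr.prems inr.hyps] by simp
qed

end

theorem mainTheorem19:
  fixes U V W :: "nat ogp" and F :: "(nat, nat) pd \<Rightarrow> (nat, nat) pd"
    and \<iota> :: "nat \<Rightarrow> nat"
  assumes "molecule U" and "molecule V"
    and "strict_functor U V F" and "active U V F"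
    and "subincl W \<iota> U"
  shows "subincl (fst (F (W, \<iota>))) (snd (F (W, \<iota>))) V"
proof -
  have cU: "cell U (U, id)" using assms(1) ogiso_id unfolding cell_def ogiso_def by auto
  obtain j where j: "subincl (fst (F (W, id \<circ> \<iota>))) j (fst (F (U, id)))" "finite {x. j x \<noteq> x}"
    "\<forall>z\<in>els (fst (F (W, id \<circ> \<iota>))). snd (F (U, id)) (j z) = snd (F (W, id \<circ> \<iota>)) z"
    using key[OF assms(3) assms(5) cU] by blast
  obtain Y hY where FY: "F (U, id) = (Y, hY)" by fastforce
  obtain Z hZ where FZ: "F (W, \<iota>) = (Z, hZ)" by fastforce
  have j': "subincl Z j Y" "\<forall>z\<in>els Z. hY (j z) = hZ z" using j FY FZ by auto
  have isoY: "ogiso Y hY V" using assms(4) cU ogiso_id FY unfolding active_def by fastforce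
  have mY: "molecule Y" using F_cell[OF assms(3) cU] FY unfolding cell_def by simp
  define h' where "h' = (\<lambda>x. if x \<in> els Y then hY x else x)"
  have "ogiso Y h' V" by (rule ogiso_cong[OF mol_ogpos[OF mY] isoY]) (simp add: h'_def)
  then have sY: "subincl Y h' V" by (rule subincl.iso[OF mY assms(2)])
  have s: "subincl Z (h' \<circ> j) V" by (rule subincl.comp[OF j'(1) sY])
  have "{x. (h' \<circ> j) x \<noteq> x} \<subseteq> {x. j x \<noteq> x} \<union> els Y" by (auto simp: h'_def)
  moreover have "finite (els Y)" using mol_ogpos[OF mY] unfolding ogpos_def by blast
  ultimately have fi: "finite {x. (h' \<circ> j) x \<noteq> x}" using j(2) by (meson finite_UnI finite_subset)
  have mo: "ogmorph Z j Y" using subincl_props[OF j'(1)] by blast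
  have ag: "\<forall>z\<in>els Z. hZ z = (h' \<circ> j) z"
  proof
    fix z assume z: "z \<in> els Z"
    then have "j z \<in> els Y" using mo unfolding ogmorph_def by blast
    then show "hZ z = (h' \<circ> j) z" using j'(2) z by (simp add: h'_def)
  qed
  have "subincl Z hZ V" by (rule subincl_fix[OF s fi ag])
  then show ?thesis using FZ by simp
qed

end
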